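(* Let $G$ be a group with finite presentation $\mathcal P=\langle t,\mathcal A:\mathcal R,\ t^{-1}at=\phi(a)\ (a\in\mathcal A)\rangle$ of bounded depth $B\ge0$, $X$ its Cayley 2-complex and $P:X\to\mathbb R$ the level map. If $\alpha$ is an edge path loop in $X$ with $P(\alpha)\subset(-\infty,L]$, then $\alpha$ is homotopically trivial by a homotopy $H$ with $P(H)\subset(-\infty,L+B]$.
   Context: $\mathcal A$ is finite, $\mathcal R\subset F(\mathcal A)$ finite, $\phi:F(\mathcal A)\to F(\mathcal A)$ a homomorphism. Let $N_0$ be the normal closure in $F(\mathcal A)$ of $\bigcup_{j\ge0}\phi^j(\mathcal R)$ and $N^\infty=\bigcup_{i\ge0}\phi^{-i}(N_0)$; $\mathcal P$ has bounded depth $B$ if $N^\infty=\bigcup_{i=0}^B\phi^{-i}(N_0)$. $X$ is the simply connected 2-complex with vertex set $G$, 1-skeleton the Cayley graph with respect to $\mathcal A\cup\{t\}$, and 2-cells for relators. $P$ sends a vertex to the exponent sum of $t$ in it, each $\mathcal R$-cell to the level of its vertices, each conjugation 2-cell (boundary $a t\phi(a)^{-1}t^{-1}$, $a$-edge at level $L'$) onto $[L',L'+1]$, and $t$-edges linearly. *)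

theory Defs
  imports Complex_Main
begin

text \<open>A word over an alphabet 'b is a list of pairs (x, e) where e = True means the
  inverse letter x^-1.  Free group elements are such words up to free reduction.\<close>

type_synonym 'b fword = "('b \<times> bool) list"

definition winv :: "'b fword \<Rightarrow> 'b fword" where
  "winv w = rev (map (\<lambda>(x, e). (x, \<not> e)) w)"

text \<open>The reflexive-transitive
  closure relates w to the empty word iff w lies in the normal closure of S in the free
  group (iff w represents 1 in the group presented by S).\<close>

inductive elem_step :: "'b fword set \<Rightarrow> 'b fword \<Rightarrow> 'b fword \<Rightarrow> bool" for S where
  ins_free: "elem_step S (u @ v) (u @ [(x, e), (x, \<not> e)] @ v)"
| del_free: "elem_step S (u @ [(x, e), (x, \<not> e)] @ v) (u @ v)"
| ins_rel: "r \<in> S \<Longrightarrow> elem_step S (u @ v) (u @ r @ v)"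
| del_rel: "r \<in> S \<Longrightarrow> elem_step S (u @ r @ v) (u @ v)"

definition in_normal_closure :: "'b fword set \<Rightarrow> 'b fword \<Rightarrow> bool" where
  "in_normal_closure S w \<longleftrightarrow> (elem_step S)\<^sup>*\<^sup>* w []"

definition phi_word :: "('a \<Rightarrow> 'a fword) \<Rightarrow> 'a fword \<Rightarrow> 'a fword" where
  "phi_word \<phi> w = concat (map (\<lambda>(a, e). if e then winv (\<phi> a) else \<phi> a) w)"

definition N0 :: "('a \<Rightarrow> 'a fword) \<Rightarrow> 'a fword set \<Rightarrow> 'a fword set" where
  "N0 \<phi> R = {w. in_normal_closure (\<Union>j. (phi_word \<phi> ^^ j) ` R) w}"

text \<open>Bounded depth B: N^infty = union over i <= B of phi^-i(N_0).
  (The inclusion of the finite union in N^infty is automatic.)\<close>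

definition bounded_depth :: "('a \<Rightarrow> 'a fword) \<Rightarrow> 'a fword set \<Rightarrow> nat \<Rightarrow> bool" where
  "bounded_depth \<phi> R B \<longleftrightarrow>
     (\<forall>w. (\<exists>i. (phi_word \<phi> ^^ i) w \<in> N0 \<phi> R) \<longrightarrow> (\<exists>i\<le>B. (phi_word \<phi> ^^ i) w \<in> N0 \<phi> R))"

datatype 'a letter = T | Gen 'a

definition lift_word :: "'a fword \<Rightarrow> 'a letter fword" where
  "lift_word w = map (\<lambda>(a, e). (Gen a, e)) w"

definition pres_rels :: "('a \<Rightarrow> 'a fword) \<Rightarrow> 'a fword set \<Rightarrow> 'a letter fword set" where
  "pres_rels \<phi> R = lift_word ` R \<union>
     {[(Gen a, False), (T, False)] @ winv (lift_word (\<phi> a)) @ [(T, True)] | a. True}"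

text \<open>Boundary words of the 2-cells of X at a vertex: all cyclic rotations of the relators
  and of their inverses (read in either orientation, from any corner).\<close>

definition cell_boundaries :: "('a \<Rightarrow> 'a fword) \<Rightarrow> 'a fword set \<Rightarrow> 'a letter fword set" where
  "cell_boundaries \<phi> R = {rotate k r | k r. r \<in> pres_rels \<phi> R \<or> winv r \<in> pres_rels \<phi> R}"

text \<open>The level map P on vertices: exponent sum of t.\<close>

definition tsum :: "'a letter fword \<Rightarrow> int" where
  "tsum w = (\<Sum>p\<leftarrow>w. (case p of (T, e) \<Rightarrow> (if e then -1 else 1) | (Gen _, _) \<Rightarrow> 0))"

text \<open>The edge path starting at the vertex g (given by any word) and reading w
  has all its vertices at level <= M (hence, P being linear on t-edges and constant
  on A-edges, P maps the whole path into (-infinity, M]).\<close>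

definition path_below :: "'a letter fword \<Rightarrow> real \<Rightarrow> 'a letter fword \<Rightarrow> bool" where
  "path_below g M w \<longleftrightarrow> (\<forall>k\<le>length w. real_of_int (tsum (g @ take k w)) \<le> M)"

text \<open>Elementary (cellular) homotopy moves of edge paths based at g in X which stay in
  P^-1(-infinity, M]: removing/inserting a backtrack or a 2-cell boundary, where all
  paths involved (hence all edges and 2-cells swept, P mapping each 2-cell onto the
  interval spanned by its vertex levels) lie at level <= M.\<close>

definition bounded_step ::
  "('a \<Rightarrow> 'a fword) \<Rightarrow> 'a fword set \<Rightarrow> 'a letter fword \<Rightarrow> real \<Rightarrow> 'a letter fword \<Rightarrow> 'a letter fword \<Rightarrow> bool" where
  "bounded_step \<phi> R g M u v \<longleftrightarrow>
     elem_step (cell_boundaries \<phi> R) u v \<and> path_below g M u \<and> path_below g M v"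

end

theory Submission
  imports Defs
begin


lemma winv_Nil[simp]: "winv [] = []" by (simp add: winv_def)
lemma winv_Cons[simp]: "winv (x # w) = winv w @ [(fst x, \<not> snd x)]"
  by (cases x) (simp add: winv_def)
lemma winv_append[simp]: "winv (u @ v) = winv v @ winv u" by (simp add: winv_def)
lemma winv_winv[simp]: "winv (winv w) = w" by (induction w) auto

lemma lift_Nil[simp]: "lift_word [] = []" by (simp add: lift_word_def)
lemma lift_Cons[simp]: "lift_word (x # w) = (Gen (fst x), snd x) # lift_word w"
  by (cases x) (simp add: lift_word_def)
lemma lift_append[simp]: "lift_word (u @ v) = lift_word u @ lift_word v"
  by (simp add: lift_word_def)
lemma lift_winv: "lift_word (winv w) = winv (lift_word w)"
  by (induction w) auto

lemma phi_Nil[simp]: "phi_word f [] = []" by (simp add: phi_word_def)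
lemma phi_append[simp]: "phi_word f (u @ v) = phi_word f u @ phi_word f v"
  by (simp add: phi_word_def)
lemma phi_Cons: "phi_word f (x # w) = phi_word f [x] @ phi_word f w"
  using phi_append[of f "[x]" w] by simp
lemma phi_single_F[simp]: "phi_word f [(a,False)] = f a" by (simp add: phi_word_def)
lemma phi_single_T[simp]: "phi_word f [(a,True)] = winv (f a)" by (simp add: phi_word_def)
lemma phi_Cons2[simp]: "phi_word f (x # w) = (if snd x then winv (f (fst x)) else f (fst x)) @ phi_word f w"
  by (cases x) (simp add: phi_word_def)
lemma phi_winv: "phi_word f (winv w) = winv (phi_word f w)"
  by (induction w) auto

lemma Phi_append: "(phi_word f ^^ n) (u @ v) = (phi_word f ^^ n) u @ (phi_word f ^^ n) v"
  by (induction n) auto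
lemma Phi_Nil[simp]: "(phi_word f ^^ n) [] = []"
  by (induction n) auto
lemma Phi_winv: "(phi_word f ^^ n) (winv w) = winv ((phi_word f ^^ n) w)"
  by (induction n) (auto simp: phi_winv)
lemma Phi_Cons: "(phi_word f ^^ n) (x # w) = (phi_word f ^^ n) [x] @ (phi_word f ^^ n) w"
  using Phi_append[where f=f and n=n and u="[x]" and v=w] by simp

lemma tsum_Nil[simp]: "tsum [] = 0" by (simp add: tsum_def)
lemma tsum_T[simp]: "tsum ((T,e) # w) = (if e then -1 else 1) + tsum w" by (simp add: tsum_def)
lemma tsum_G[simp]: "tsum ((Gen a,e) # w) = tsum w" by (simp add: tsum_def)
lemma tsum_append[simp]: "tsum (u @ v) = tsum u + tsum v" by (simp add: tsum_def)
lemma tsum_lift[simp]: "tsum (lift_word w) = 0" by (induction w) auto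
lemma tsum_winv[simp]: "tsum (winv w) = - tsum w"
proof (induction w)
  case (Cons x w)
  obtain l e where x: "x = (l,e)" by force
  show ?case using Cons by (cases l) (auto simp: x)
qed simp
lemma tsum_repT[simp]: "tsum (replicate n (T,e)) = (if e then - int n else int n)"
  by (induction n) auto
lemma tsum_rotate1[simp]: "tsum (rotate1 w) = tsum w"
proof (cases w)
  case (Cons x xs)
  have "tsum (x # xs) = tsum ([x] @ xs)" by simp
  also have "\<dots> = tsum (xs @ [x])" by (simp only: tsum_append add.commute)
  finally show ?thesis using Cons by simp
qed simp
lemma tsum_rotate[simp]: "tsum (rotate k w) = tsum w"
  by (induction k) (auto simp: rotate_Suc)

lemma cb_tsum: "r \<in> cell_boundaries \<phi> R \<Longrightarrow> tsum r = 0"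
proof -
  assume "r \<in> cell_boundaries \<phi> R"
  then obtain k r0 where r: "r = rotate k r0" and h: "r0 \<in> pres_rels \<phi> R \<or> winv r0 \<in> pres_rels \<phi> R"
    unfolding cell_boundaries_def by blast
  have z: "\<And>x. x \<in> pres_rels \<phi> R \<Longrightarrow> tsum x = 0"
    unfolding pres_rels_def by (auto simp: lift_winv)
  have "tsum r0 = 0" using h z[of r0] z[of "winv r0"] by auto
  then show ?thesis using r by simp
qed



lemma pb_base: "path_below h M w \<Longrightarrow> real_of_int (tsum h) \<le> M"
  unfolding path_below_def by (metis le0 append_Nil2 take0)
lemma pb_Nil[simp]: "path_below h M [] \<longleftrightarrow> real_of_int (tsum h) \<le> M"
  by (simp add: path_below_def)
lemma pb_Cons[simp]: "path_below h M (x # w) \<longleftrightarrow> real_of_int (tsum h) \<le> M \<and> path_below (h @ [x]) M w"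
proof
  assume a: "path_below h M (x # w)"
  have "path_below (h @ [x]) M w" unfolding path_below_def
  proof (intro allI impI)
    fix k assume "k \<le> length w"
    then have "Suc k \<le> length (x # w)" by simp
    then have "real_of_int (tsum (h @ take (Suc k) (x # w))) \<le> M" using a unfolding path_below_def by blast
    moreover have "h @ take (Suc k) (x # w) = (h @ [x]) @ take k w" by simp
    ultimately show "real_of_int (tsum ((h @ [x]) @ take k w)) \<le> M" by metis
  qed
  then show "real_of_int (tsum h) \<le> M \<and> path_below (h @ [x]) M w" using pb_base[OF a] by simp
next
  assume a: "real_of_int (tsum h) \<le> M \<and> path_below (h @ [x]) M w"
  show "path_below h M (x # w)" unfolding path_below_def
  proof (intro allI impI)
    fix k assume k: "k \<le> length (x # w)"
    show "real_of_int (tsum (h @ take k (x # w))) \<le> M"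
    proof (cases k)
      case 0 then show ?thesis using a by simp
    next
      case (Suc j)
      then have "j \<le> length w" using k by simp
      then have "real_of_int (tsum ((h @ [x]) @ take j w)) \<le> M" using a unfolding path_below_def by blast
      then show ?thesis using Suc by simp
    qed
  qed
qed

lemma pb_append[simp]: "path_below h M (u @ v) \<longleftrightarrow> path_below h M u \<and> path_below (h @ u) M v"
  by (induction u arbitrary: h) (auto dest: pb_base)

lemma pb_cong: "tsum h = tsum h' \<Longrightarrow> path_below h M w = path_below h' M w"
  unfolding path_below_def by simp

lemma pb_tsum_simp: "NO_MATCH [] h \<Longrightarrow> path_below h M w = path_below (replicate (nat (tsum h)) (T,False) @ replicate (nat (- tsum h)) (T,True)) M w"
  by (rule pb_cong) simp

lemma pb_lift[simp]: "path_below h M (lift_word w) \<longleftrightarrow> real_of_int (tsum h) \<le> M"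
  by (induction w arbitrary: h) auto
lemma pb_winv_lift[simp]: "path_below h M (winv (lift_word w)) \<longleftrightarrow> real_of_int (tsum h) \<le> M"
  by (simp add: lift_winv[symmetric])
lemma pb_repU[simp]: "path_below h M (replicate n (T,False)) \<longleftrightarrow> real_of_int (tsum h) + n \<le> M"
  by (induction n arbitrary: h) auto
lemma pb_repD[simp]: "path_below h M (replicate n (T,True)) \<longleftrightarrow> real_of_int (tsum h) \<le> M"
  by (induction n arbitrary: h) auto

lemma pb_mono: "path_below h M w \<Longrightarrow> M \<le> M' \<Longrightarrow> path_below h M' w"
  unfolding path_below_def by force

lemma elem_ctx: "elem_step S u v \<Longrightarrow> elem_step S (p @ u @ s) (p @ v @ s)"
proof (induction rule: elem_step.induct)
  case (ins_free u v x e) then show ?case using elem_step.ins_free[of S "p@u" "v@s" x e] by simp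
next
  case (del_free u x e v) then show ?case using elem_step.del_free[of S "p@u" x e "v@s"] by simp
next
  case (ins_rel r u v) then show ?case using elem_step.ins_rel[of r S "p@u" "v@s"] by simp
next
  case (del_rel r u v) then show ?case using elem_step.del_rel[of r S "p@u" "v@s"] by simp
qed

lemma elem_sym: "elem_step S u v \<Longrightarrow> elem_step S v u"
proof (induction rule: elem_step.induct)
  case (ins_free u v x e) then show ?case using elem_step.del_free[of S u x e v] by simp
next
  case (del_free u x e v) then show ?case using elem_step.ins_free[of S u v x e] by simp
qed (auto intro: elem_step.intros)

lemma tsum_pair[simp]: "tsum ((x,e) # (x, \<not> e) # v) = tsum v"
  by (cases x) auto

lemma elem_tsum: "elem_step (cell_boundaries \<phi> R) u v \<Longrightarrow> tsum u = tsum v"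
  by (induction rule: elem_step.induct) (auto simp: cb_tsum)

lemma bs_tsum: "bounded_step \<phi> R h M u v \<Longrightarrow> tsum u = tsum v"
  unfolding bounded_step_def using elem_tsum by blast

lemma rt_tsum: "(bounded_step \<phi> R h M)\<^sup>*\<^sup>* u v \<Longrightarrow> tsum u = tsum v"
  by (induction rule: rtranclp_induct) (auto dest: bs_tsum)

lemma bs_sym: "bounded_step \<phi> R h M u v \<Longrightarrow> bounded_step \<phi> R h M v u"
  unfolding bounded_step_def using elem_sym by blast

lemma rt_sym: "(bounded_step \<phi> R h M)\<^sup>*\<^sup>* u v \<Longrightarrow> (bounded_step \<phi> R h M)\<^sup>*\<^sup>* v u"
  by (induction rule: rtranclp_induct) (auto intro: converse_rtranclp_into_rtranclp bs_sym)

lemma bs_ctx: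
  assumes "bounded_step \<phi> R (g @ p) M u v" "path_below g M p" "path_below (g @ p @ u) M s"
  shows "bounded_step \<phi> R g M (p @ u @ s) (p @ v @ s)"
proof -
  have e: "elem_step (cell_boundaries \<phi> R) u v" and pu: "path_below (g@p) M u" and pv: "path_below (g@p) M v"
    using assms(1) unfolding bounded_step_def by auto
  have t: "tsum u = tsum v" using bs_tsum[OF assms(1)] .
  have s2: "path_below (g @ p @ v) M s" using assms(3) pb_cong[of "g@p@u" "g@p@v"] t by simp
  show ?thesis unfolding bounded_step_def
    using elem_ctx[OF e] assms(2,3) pu pv s2 by simp
qed

lemma rt_ctx:
  assumes "(bounded_step \<phi> R (g @ p) M)\<^sup>*\<^sup>* u v" "path_below g M p" "path_below (g @ p @ u) M s"
  shows "(bounded_step \<phi> R g M)\<^sup>*\<^sup>* (p @ u @ s) (p @ v @ s)"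
  using assms(1)
proof (induction rule: rtranclp_induct)
  case (step y z)
  have "tsum u = tsum y" using rt_tsum[OF step(1)] .
  then have "path_below (g @ p @ y) M s" using assms(3) pb_cong[of "g@p@u" "g@p@y"] by simp
  then show ?case using step bs_ctx[OF step(2) assms(2)] by (meson rtranclp.rtrancl_into_rtrancl)
qed simp

lemma rt_mono: "(bounded_step \<phi> R h M)\<^sup>*\<^sup>* u v \<Longrightarrow> M \<le> M' \<Longrightarrow> (bounded_step \<phi> R h M')\<^sup>*\<^sup>* u v"
proof (induction rule: rtranclp_induct)
  case (step y z)
  then have "bounded_step \<phi> R h M' y z" unfolding bounded_step_def using pb_mono by blast
  then show ?case using step by (meson rtranclp.rtrancl_into_rtrancl)
qed simp

lemma bs1: "elem_step (cell_boundaries \<phi> R) u v \<Longrightarrow> path_below h M u \<Longrightarrow> path_below h M v \<Longrightarrow>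
  (bounded_step \<phi> R h M)\<^sup>*\<^sup>* u v"
  unfolding bounded_step_def by auto



definition pbl :: "int \<Rightarrow> real \<Rightarrow> 'a letter fword \<Rightarrow> bool" where
  "pbl n M w \<longleftrightarrow> (\<forall>k\<le>length w. real_of_int (n + tsum (take k w)) \<le> M)"

lemma pb_pbl: "path_below h M w = pbl (tsum h) M w"
  unfolding pbl_def path_below_def by simp

definition HH :: "int \<Rightarrow> 'a letter fword" where
  "HH n = replicate (nat n) (T,False) @ replicate (nat (- n)) (T,True)"
lemma tsum_HH: "tsum (HH n) = n" unfolding HH_def by simp
lemma pbl_HH: "pbl n M w = path_below (HH n) M w" by (simp add: pb_pbl tsum_HH)

lemma pbl_base: "pbl n M w \<Longrightarrow> real_of_int n \<le> M"
  using pb_base[of "HH n" M w] by (simp add: pbl_HH tsum_HH)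

lemma pbl_Nil[simp]: "pbl n M [] \<longleftrightarrow> real_of_int n \<le> M"
  unfolding pbl_def by simp
lemma pbl_Cons[simp]: "pbl n M (x # w) \<longleftrightarrow> real_of_int n \<le> M \<and> pbl (n + tsum [x]) M w"
  using pb_Cons[of "HH n" M x w] unfolding pb_pbl tsum_append tsum_HH .
lemma pbl_append[simp]: "pbl n M (u @ v) \<longleftrightarrow> pbl n M u \<and> pbl (n + tsum u) M v"
  using pb_append[of "HH n" M u v] unfolding pb_pbl tsum_append tsum_HH .
lemma pbl_lift[simp]: "pbl n M (lift_word w) \<longleftrightarrow> real_of_int n \<le> M"
  by (simp add: pbl_HH tsum_HH)
lemma pbl_winv_lift[simp]: "pbl n M (winv (lift_word w)) \<longleftrightarrow> real_of_int n \<le> M"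
  by (simp add: pbl_HH tsum_HH)
lemma pbl_repU[simp]: "pbl n M (replicate k (T,False)) \<longleftrightarrow> real_of_int n + k \<le> M"
  by (simp add: pbl_HH tsum_HH)
lemma pbl_repD[simp]: "pbl n M (replicate k (T,True)) \<longleftrightarrow> real_of_int n \<le> M"
  by (simp add: pbl_HH tsum_HH)

lemma tsum_single_T[simp]: "tsum [(T,e)] = (if e then -1 else 1)" by simp
lemma tsum_single_G[simp]: "tsum [(Gen a,e)] = 0" by simp

lemma rel_in_cb: "\<phi> a' = Y \<Longrightarrow> [(Gen a',False),(T,False)] @ winv (lift_word Y) @ [(T,True)] \<in> cell_boundaries \<phi> R"
  unfolding cell_boundaries_def pres_rels_def
  by (rule CollectI, rule exI[of _ 0], auto)
lemma rel1_in_cb: "\<phi> a' = Y \<Longrightarrow> (T,False) # winv (lift_word Y) @ [(T,True),(Gen a',False)] \<in> cell_boundaries \<phi> R"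
  unfolding cell_boundaries_def pres_rels_def
  by (rule CollectI, rule exI[of _ 1], rule exI[of _ "[(Gen a',False),(T,False)] @ winv (lift_word Y) @ [(T,True)]"], auto)
lemma relR_in_cb: "r \<in> R \<Longrightarrow> lift_word r \<in> cell_boundaries \<phi> R"
  unfolding cell_boundaries_def pres_rels_def
  by (rule CollectI, rule exI[of _ 0], auto)

lemma ins_inv_lift:
  assumes "path_below h M (u @ v)"
  shows "(bounded_step \<phi> R h M)\<^sup>*\<^sup>* (u @ v) (u @ winv (lift_word Y) @ lift_word Y @ v)"
proof (induction Y)
  case Nil then show ?case by simp
next
  case (Cons y Y)
  obtain a e where y: "y = (a,e)" by force
  have st: "elem_step (cell_boundaries \<phi> R) ((u @ winv (lift_word Y)) @ (lift_word Y @ v))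
     ((u @ winv (lift_word Y)) @ [(Gen a, \<not> e), (Gen a, \<not> \<not> e)] @ (lift_word Y @ v))"
    by (rule elem_step.ins_free)
  have "bounded_step \<phi> R h M (u @ winv (lift_word Y) @ lift_word Y @ v) (u @ winv (lift_word (y # Y)) @ lift_word (y # Y) @ v)"
    unfolding bounded_step_def using st assms by (auto simp: y pb_pbl dest: pbl_base)
  then show ?case using Cons by (meson rtranclp.rtrancl_into_rtrancl)
qed

lemma S2:
  assumes "real_of_int (tsum h) + 1 \<le> M"
  shows "(bounded_step \<phi> R h M)\<^sup>*\<^sup>* [(Gen a,e),(T,False)] ((T,False) # lift_word (if e then winv (\<phi> a) else \<phi> a))"
proof (cases e)
  case False
  let ?Y = "lift_word (\<phi> a)"
  have 1: "(bounded_step \<phi> R h M)\<^sup>*\<^sup>* ([(Gen a,False),(T,False)] @ []) ([(Gen a,False),(T,False)] @ winv ?Y @ ?Y @ [])"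
    by (rule ins_inv_lift) (use assms in \<open>simp add: pb_pbl\<close>)
  have e2: "elem_step (cell_boundaries \<phi> R) (([(Gen a,False),(T,False)] @ winv ?Y) @ ?Y)
     (([(Gen a,False),(T,False)] @ winv ?Y) @ [(T,True),(T,\<not>True)] @ ?Y)"
    by (rule elem_step.ins_free)
  have e3: "elem_step (cell_boundaries \<phi> R) ([] @ ([(Gen a,False),(T,False)] @ winv ?Y @ [(T,True)]) @ ((T,False) # ?Y))
     ([] @ ((T,False) # ?Y))"
    by (rule elem_step.del_rel) (rule rel_in_cb, rule refl)
  have 2: "(bounded_step \<phi> R h M)\<^sup>*\<^sup>* ([(Gen a,False),(T,False)] @ winv ?Y @ ?Y) ([(Gen a,False),(T,False)] @ winv ?Y @ [(T,True),(T,False)] @ ?Y)"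
    by (rule bs1) (use e2 assms in \<open>simp_all add: pb_pbl\<close>)
  have 3: "(bounded_step \<phi> R h M)\<^sup>*\<^sup>* ([(Gen a,False),(T,False)] @ winv ?Y @ [(T,True),(T,False)] @ ?Y) ((T,False) # ?Y)"
    by (rule bs1) (use e3 assms in \<open>simp_all add: pb_pbl\<close>)
  show ?thesis using 1 2 3 False by simp
next
  case True
  let ?Y = "lift_word (\<phi> a)"
  have e1: "elem_step (cell_boundaries \<phi> R) ([] @ [(Gen a,True),(T,False)])
      ([] @ ((T,False) # winv ?Y @ [(T,True),(Gen a,False)]) @ [(Gen a,True),(T,False)])"
    by (rule elem_step.ins_rel) (rule rel1_in_cb, rule refl)
  have e2: "elem_step (cell_boundaries \<phi> R) (((T,False) # winv ?Y @ [(T,True)]) @ [(Gen a,False),(Gen a,\<not>False)] @ [(T,False)])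
      (((T,False) # winv ?Y @ [(T,True)]) @ [(T,False)])"
    by (rule elem_step.del_free)
  have e3: "elem_step (cell_boundaries \<phi> R) (((T,False) # winv ?Y) @ [(T,True),(T,\<not>True)] @ [])
      (((T,False) # winv ?Y) @ [])"
    by (rule elem_step.del_free)
  have 1: "(bounded_step \<phi> R h M)\<^sup>*\<^sup>* [(Gen a,True),(T,False)] ((T,False) # winv ?Y @ [(T,True),(Gen a,False),(Gen a,True),(T,False)])"
    by (rule bs1) (use e1 assms in \<open>simp_all add: pb_pbl\<close>)
  have 2: "(bounded_step \<phi> R h M)\<^sup>*\<^sup>* ((T,False) # winv ?Y @ [(T,True),(Gen a,False),(Gen a,True),(T,False)]) ((T,False) # winv ?Y @ [(T,True),(T,False)])"
    by (rule bs1) (use e2 assms in \<open>simp_all add: pb_pbl\<close>)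
  have 3: "(bounded_step \<phi> R h M)\<^sup>*\<^sup>* ((T,False) # winv ?Y @ [(T,True),(T,False)]) ((T,False) # winv ?Y)"
    by (rule bs1) (use e3 assms in \<open>simp_all add: pb_pbl\<close>)
  show ?thesis using 1 2 3 True by (simp add: lift_winv)
qed



lemma S1:
  assumes "real_of_int (tsum h) \<le> M"
  shows "(bounded_step \<phi> R h M)\<^sup>*\<^sup>* [(T,True),(Gen a,e)] (lift_word (if e then winv (\<phi> a) else \<phi> a) @ [(T,True)])"
proof -
  let ?Z = "lift_word (if e then winv (\<phi> a) else \<phi> a)"
  have e1: "elem_step (cell_boundaries \<phi> R) ([(T,True),(Gen a,e)] @ []) ([(T,True),(Gen a,e)] @ [(T,False),(T,\<not>False)] @ [])"
    by (rule elem_step.ins_free)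
  have 1: "(bounded_step \<phi> R h M)\<^sup>*\<^sup>* [(T,True),(Gen a,e)] ([(T,True)] @ [(Gen a,e),(T,False)] @ [(T,True)])"
    by (rule bs1) (use e1 assms in \<open>simp_all add: pb_pbl\<close>)
  have 2: "(bounded_step \<phi> R h M)\<^sup>*\<^sup>* ([(T,True)] @ [(Gen a,e),(T,False)] @ [(T,True)]) ([(T,True)] @ ((T,False) # ?Z) @ [(T,True)])"
    by (rule rt_ctx) (rule S2, use assms in \<open>simp_all add: pb_pbl\<close>)
  have e3: "elem_step (cell_boundaries \<phi> R) ([] @ [(T,True),(T,\<not>True)] @ (?Z @ [(T,True)])) ([] @ (?Z @ [(T,True)]))"
    by (rule elem_step.del_free)
  have 3: "(bounded_step \<phi> R h M)\<^sup>*\<^sup>* ([(T,True)] @ ((T,False) # ?Z) @ [(T,True)]) (?Z @ [(T,True)])"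
    by (rule bs1) (use e3 assms in \<open>simp_all add: pb_pbl\<close>)
  show ?thesis using 1 2 3 by (meson rtranclp_trans)
qed

lemma B1:
  assumes "real_of_int (tsum h) \<le> M"
  shows "(bounded_step \<phi> R h M)\<^sup>*\<^sup>* ((T,True) # lift_word X) (lift_word (phi_word \<phi> X) @ [(T,True)])"
  using assms
proof (induction X arbitrary: h)
  case Nil then show ?case by simp
next
  case (Cons x X)
  obtain a e where x: "x = (a,e)" by force
  let ?Z = "lift_word (if e then winv (\<phi> a) else \<phi> a)"
  have 1: "(bounded_step \<phi> R h M)\<^sup>*\<^sup>* ([] @ [(T,True),(Gen a,e)] @ lift_word X) ([] @ (?Z @ [(T,True)]) @ lift_word X)"
    by (rule rt_ctx) (rule S1, use Cons.prems in \<open>simp_all add: pb_pbl\<close>)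
  have 2: "(bounded_step \<phi> R h M)\<^sup>*\<^sup>* (?Z @ ((T,True) # lift_word X) @ []) (?Z @ (lift_word (phi_word \<phi> X) @ [(T,True)]) @ [])"
    by (rule rt_ctx) (rule Cons.IH, use Cons.prems in \<open>simp_all add: pb_pbl\<close>)
  show ?case using rtranclp_trans[OF 1[simplified] 2[simplified]] by (cases e) (simp_all add: x)
qed

lemma B2:
  assumes "real_of_int (tsum h) + 1 \<le> M"
  shows "(bounded_step \<phi> R h M)\<^sup>*\<^sup>* (lift_word X @ [(T,False)]) ((T,False) # lift_word (phi_word \<phi> X))"
  using assms
proof (induction X arbitrary: h)
  case Nil then show ?case by simp
next
  case (Cons x X)
  obtain a e where x: "x = (a,e)" by force
  let ?Z = "lift_word (if e then winv (\<phi> a) else \<phi> a)"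
  have 1: "(bounded_step \<phi> R h M)\<^sup>*\<^sup>* ([(Gen a,e)] @ (lift_word X @ [(T,False)]) @ []) ([(Gen a,e)] @ ((T,False) # lift_word (phi_word \<phi> X)) @ [])"
    by (rule rt_ctx) (rule Cons.IH, use Cons.prems in \<open>simp_all add: pb_pbl\<close>)
  have 2: "(bounded_step \<phi> R h M)\<^sup>*\<^sup>* ([] @ [(Gen a,e),(T,False)] @ lift_word (phi_word \<phi> X)) ([] @ ((T,False) # ?Z) @ lift_word (phi_word \<phi> X))"
    by (rule rt_ctx) (rule S2, use Cons.prems in \<open>simp_all add: pb_pbl\<close>)
  show ?case using rtranclp_trans[OF 1[simplified] 2[simplified]] by (cases e) (simp_all add: x)
qed

lemma Qlem:
  assumes "real_of_int (tsum h) \<le> M"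
  shows "(bounded_step \<phi> R h M)\<^sup>*\<^sup>* (replicate q (T,True) @ lift_word X) (lift_word ((phi_word \<phi> ^^ q) X) @ replicate q (T,True))"
  using assms
proof (induction q arbitrary: h X)
  case 0 then show ?case by simp
next
  case (Suc q)
  have 1: "(bounded_step \<phi> R h M)\<^sup>*\<^sup>* ([(T,True)] @ (replicate q (T,True) @ lift_word X) @ [])
       ([(T,True)] @ (lift_word ((phi_word \<phi> ^^ q) X) @ replicate q (T,True)) @ [])"
    by (rule rt_ctx) (rule Suc.IH, use Suc.prems in \<open>simp_all add: pb_pbl\<close>)
  have 2: "(bounded_step \<phi> R h M)\<^sup>*\<^sup>* ([] @ ((T,True) # lift_word ((phi_word \<phi> ^^ q) X)) @ replicate q (T,True))
       ([] @ (lift_word (phi_word \<phi> ((phi_word \<phi> ^^ q) X)) @ [(T,True)]) @ replicate q (T,True))"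
    by (rule rt_ctx) (rule B1, use Suc.prems in \<open>simp_all add: pb_pbl\<close>)
  show ?case using 1 2 by simp
qed

lemma P1:
  assumes "real_of_int (tsum h) + 1 \<le> M"
  shows "(bounded_step \<phi> R h M)\<^sup>*\<^sup>* (lift_word X) ((T,False) # lift_word (phi_word \<phi> X) @ [(T,True)])"
proof -
  have e1: "elem_step (cell_boundaries \<phi> R) ([] @ lift_word X) ([] @ [(T,False),(T,\<not>False)] @ lift_word X)"
    by (rule elem_step.ins_free)
  have 1: "(bounded_step \<phi> R h M)\<^sup>*\<^sup>* (lift_word X) ([(T,False)] @ ((T,True) # lift_word X) @ [])"
    by (rule bs1) (use e1 assms in \<open>simp_all add: pb_pbl\<close>)
  have 2: "(bounded_step \<phi> R h M)\<^sup>*\<^sup>* ([(T,False)] @ ((T,True) # lift_word X) @ []) ([(T,False)] @ (lift_word (phi_word \<phi> X) @ [(T,True)]) @ [])"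
    by (rule rt_ctx) (rule B1, use assms in \<open>simp_all add: pb_pbl\<close>)
  show ?thesis using 1 2 by simp
qed

lemma PU:
  assumes "real_of_int (tsum h) + i \<le> M"
  shows "(bounded_step \<phi> R h M)\<^sup>*\<^sup>* (lift_word X) (replicate i (T,False) @ lift_word ((phi_word \<phi> ^^ i) X) @ replicate i (T,True))"
  using assms
proof (induction i)
  case 0 then show ?case by simp
next
  case (Suc i)
  have 1: "(bounded_step \<phi> R h M)\<^sup>*\<^sup>* (lift_word X) (replicate i (T,False) @ lift_word ((phi_word \<phi> ^^ i) X) @ replicate i (T,True))"
    by (rule Suc.IH) (use Suc.prems in simp)
  have 2: "(bounded_step \<phi> R h M)\<^sup>*\<^sup>* (replicate i (T,False) @ lift_word ((phi_word \<phi> ^^ i) X) @ replicate i (T,True))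
     (replicate i (T,False) @ ((T,False) # lift_word (phi_word \<phi> ((phi_word \<phi> ^^ i) X)) @ [(T,True)]) @ replicate i (T,True))"
    by (rule rt_ctx) (rule P1, use Suc.prems in \<open>simp_all add: pb_pbl\<close>)
  have r: "replicate i (T,False) @ ((T,False) # Y @ [(T,True)]) @ replicate i (T,True)
     = replicate (Suc i) (T,False) @ Y @ replicate (Suc i) (T,True)" for Y :: "'a letter fword"
    by (simp add: replicate_append_same replicate_app_Cons_same)
  show ?case using 1 2 r by (metis rtranclp_trans funpow.simps(2) comp_apply)
qed

lemma TI:
  assumes "path_below h M (u @ v)"
  shows "(bounded_step \<phi> R h M)\<^sup>*\<^sup>* (u @ v) (u @ replicate j (T,True) @ replicate j (T,False) @ v)"
proof (induction j)
  case 0 then show ?case by simp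
next
  case (Suc j)
  have e: "elem_step (cell_boundaries \<phi> R) ((u @ replicate j (T,True)) @ (replicate j (T,False) @ v))
     ((u @ replicate j (T,True)) @ [(T,True),(T,\<not>True)] @ (replicate j (T,False) @ v))"
    by (rule elem_step.ins_free)
  have r: "(u @ replicate j (T,True)) @ [(T,True),(T,\<not>True)] @ (replicate j (T,False) @ v)
     = u @ replicate (Suc j) (T,True) @ replicate (Suc j) (T,False) @ v"
    by (simp add: replicate_append_same replicate_app_Cons_same)
  have e': "elem_step (cell_boundaries \<phi> R) (u @ replicate j (T,True) @ replicate j (T,False) @ v) (u @ replicate (Suc j) (T,True) @ replicate (Suc j) (T,False) @ v)"
    using e unfolding r by simp
  have "bounded_step \<phi> R h M (u @ replicate j (T,True) @ replicate j (T,False) @ v) (u @ replicate (Suc j) (T,True) @ replicate (Suc j) (T,False) @ v)"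
    unfolding bounded_step_def using e' assms by (auto simp: pb_pbl dest: pbl_base)
  then show ?case using Suc by (meson rtranclp.rtrancl_into_rtrancl)
qed

lemma TD:
  assumes "real_of_int (tsum h) + n \<le> M"
  shows "(bounded_step \<phi> R h M)\<^sup>*\<^sup>* (replicate n (T,False) @ replicate n (T,True)) []"
  using assms
proof (induction n)
  case 0 then show ?case by simp
next
  case (Suc n)
  have e: "elem_step (cell_boundaries \<phi> R) (replicate n (T,False) @ [(T,False),(T,\<not>False)] @ replicate n (T,True))
     (replicate n (T,False) @ replicate n (T,True))"
    by (rule elem_step.del_free)
  have r: "replicate n (T,False) @ [(T,False),(T,\<not>False)] @ replicate n (T,True)
     = replicate (Suc n) (T,False) @ replicate (Suc n) (T,True)"
    by (simp add: replicate_append_same replicate_app_Cons_same)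
  have e': "elem_step (cell_boundaries \<phi> R) (replicate (Suc n) (T,False) @ replicate (Suc n) (T,True)) (replicate n (T,False) @ replicate n (T,True))"
    using e unfolding r .
  have "bounded_step \<phi> R h M (replicate (Suc n) (T,False) @ replicate (Suc n) (T,True)) (replicate n (T,False) @ replicate n (T,True))"
    unfolding bounded_step_def using e' Suc.prems by (auto simp: pb_pbl)
  moreover have "(bounded_step \<phi> R h M)\<^sup>*\<^sup>* (replicate n (T,False) @ replicate n (T,True)) []"
    using Suc by simp
  ultimately show ?case by (meson converse_rtranclp_into_rtranclp)
qed



lemma RJ:
  assumes "real_of_int (tsum h) \<le> M" "r \<in> R"
  shows "(bounded_step \<phi> R h M)\<^sup>*\<^sup>* (lift_word ((phi_word \<phi> ^^ j) r)) []"
proof -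
  let ?Z = "lift_word ((phi_word \<phi> ^^ j) r)"
  have 1: "(bounded_step \<phi> R h M)\<^sup>*\<^sup>* ([] @ []) ([] @ replicate j (T,True) @ replicate j (T,False) @ [])"
    by (rule TI) (use assms in simp)
  have e2: "elem_step (cell_boundaries \<phi> R) (replicate j (T,True) @ replicate j (T,False))
      (replicate j (T,True) @ lift_word r @ replicate j (T,False))"
    by (rule elem_step.ins_rel) (rule relR_in_cb[OF assms(2)])
  have 2: "(bounded_step \<phi> R h M)\<^sup>*\<^sup>* (replicate j (T,True) @ replicate j (T,False))
      (replicate j (T,True) @ lift_word r @ replicate j (T,False))"
    by (rule bs1) (use e2 assms in \<open>simp_all add: pb_pbl\<close>)
  have 3: "(bounded_step \<phi> R h M)\<^sup>*\<^sup>* ([] @ (replicate j (T,True) @ lift_word r) @ replicate j (T,False))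
      ([] @ (?Z @ replicate j (T,True)) @ replicate j (T,False))"
    by (rule rt_ctx) (rule Qlem, use assms in \<open>simp_all add: pb_pbl\<close>)
  have 4: "(bounded_step \<phi> R h M)\<^sup>*\<^sup>* (?Z @ []) (?Z @ replicate j (T,True) @ replicate j (T,False) @ [])"
    by (rule TI) (use assms in \<open>simp add: pb_pbl\<close>)
  have "(bounded_step \<phi> R h M)\<^sup>*\<^sup>* [] ?Z"
    using rtranclp_trans[OF rtranclp_trans[OF rtranclp_trans[OF 1[simplified] 2] 3[simplified]] rt_sym[OF 4[simplified]]] .
  then show ?thesis by (rule rt_sym)
qed

lemma LIFT1:
  assumes "elem_step (\<Union>j. (phi_word \<phi> ^^ j) ` R) V V'" "real_of_int (tsum h) \<le> M"
  shows "(bounded_step \<phi> R h M)\<^sup>*\<^sup>* (lift_word V) (lift_word V')"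
  using assms(1)
proof (cases rule: elem_step.cases)
  case (ins_free u v x e)
  have e: "elem_step (cell_boundaries \<phi> R) (lift_word u @ lift_word v) (lift_word u @ [(Gen x,e),(Gen x,\<not>e)] @ lift_word v)"
    by (rule elem_step.ins_free)
  show ?thesis by (rule bs1) (use e assms(2) ins_free in \<open>simp_all add: pb_pbl\<close>)
next
  case (del_free u x e v)
  have e: "elem_step (cell_boundaries \<phi> R) (lift_word u @ [(Gen x,e),(Gen x,\<not>e)] @ lift_word v) (lift_word u @ lift_word v)"
    by (rule elem_step.del_free)
  show ?thesis by (rule bs1) (use e assms(2) del_free in \<open>simp_all add: pb_pbl\<close>)
next
  case (ins_rel r u v)
  then obtain j r0 where r: "r = (phi_word \<phi> ^^ j) r0" "r0 \<in> R" by blast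
  have "(bounded_step \<phi> R h M)\<^sup>*\<^sup>* (lift_word u @ [] @ lift_word v) (lift_word u @ lift_word r @ lift_word v)"
    by (rule rt_ctx) (rule rt_sym, unfold r(1), rule RJ, use assms(2) r in \<open>simp_all add: pb_pbl\<close>)
  then show ?thesis using ins_rel by simp
next
  case (del_rel r u v)
  then obtain j r0 where r: "r = (phi_word \<phi> ^^ j) r0" "r0 \<in> R" by blast
  have "(bounded_step \<phi> R h M)\<^sup>*\<^sup>* (lift_word u @ lift_word r @ lift_word v) (lift_word u @ [] @ lift_word v)"
    by (rule rt_ctx) (unfold r(1), rule RJ, use assms(2) r in \<open>simp_all add: pb_pbl\<close>)
  then show ?thesis using del_rel by simp
qed

lemma LIFT:
  assumes "(elem_step (\<Union>j. (phi_word \<phi> ^^ j) ` R))\<^sup>*\<^sup>* V V'" "real_of_int (tsum h) \<le> M"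
  shows "(bounded_step \<phi> R h M)\<^sup>*\<^sup>* (lift_word V) (lift_word V')"
  using assms(1)
proof (induction rule: rtranclp_induct)
  case (step y z)
  then show ?case using LIFT1[OF step(2) assms(2)] by (meson rtranclp_trans)
qed simp



definition SS :: "('a \<Rightarrow> 'a fword) \<Rightarrow> 'a fword set \<Rightarrow> 'a fword set" where
  "SS \<phi> R = (\<Union>j. (phi_word \<phi> ^^ j) ` R)"

abbreviation Eq where "Eq \<phi> R \<equiv> (elem_step (SS \<phi> R))\<^sup>*\<^sup>*"

lemma Eq_sym: "Eq \<phi> R X Y \<Longrightarrow> Eq \<phi> R Y X"
  by (induction rule: rtranclp_induct) (auto intro: converse_rtranclp_into_rtranclp elem_sym)

lemma Eq_ctx: "Eq \<phi> R X Y \<Longrightarrow> Eq \<phi> R (p @ X @ s) (p @ Y @ s)"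
  by (induction rule: rtranclp_induct) (auto intro: rtranclp.rtrancl_into_rtrancl elem_ctx)

lemma Eq_app: "Eq \<phi> R X X' \<Longrightarrow> Eq \<phi> R Y Y' \<Longrightarrow> Eq \<phi> R (X @ Y) (X' @ Y')"
  using Eq_ctx[of \<phi> R X X' "[]" Y] Eq_ctx[of \<phi> R Y Y' X' "[]"] by (simp add: rtranclp_trans[where r="elem_step (SS \<phi> R)"])

lemma Eq_cancel1: "Eq \<phi> R (X @ winv X) []"
proof (induction X)
  case (Cons x X)
  obtain a e where x: "x = (a,e)" by force
  have 1: "Eq \<phi> R ([x] @ (X @ winv X) @ [(a, \<not> e)]) ([x] @ [] @ [(a, \<not> e)])"
    by (rule Eq_ctx[OF Cons])
  have 2: "elem_step (SS \<phi> R) ([] @ [(a,e),(a,\<not>e)] @ []) ([] @ [])" by (rule elem_step.del_free)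
  have 3: "elem_step (SS \<phi> R) ([x] @ [] @ [(a, \<not> e)]) []" using 2 by (simp add: x)
  show ?case using rtranclp.rtrancl_into_rtrancl[OF 1 3] by (simp add: x)
qed simp

lemma Eq_cancel2: "Eq \<phi> R (winv X @ X) []"
proof (induction X)
  case (Cons x X)
  obtain a e where x: "x = (a,e)" by force
  have 2: "elem_step (SS \<phi> R) (winv X @ [(a,\<not>e),(a,\<not>\<not>e)] @ X) (winv X @ X)" by (rule elem_step.del_free)
  show ?case using converse_rtranclp_into_rtranclp[OF 2 Cons] by (simp add: x)
qed simp

lemma SS_phi: "r \<in> SS \<phi> R \<Longrightarrow> phi_word \<phi> r \<in> SS \<phi> R"
  unfolding SS_def
proof -
  assume "r \<in> (\<Union>j. (phi_word \<phi> ^^ j) ` R)"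
  then obtain j r0 where "r = (phi_word \<phi> ^^ j) r0" "r0 \<in> R" by blast
  then have "phi_word \<phi> r = (phi_word \<phi> ^^ Suc j) r0" by simp
  then show "phi_word \<phi> r \<in> (\<Union>j. (phi_word \<phi> ^^ j) ` R)" using \<open>r0 \<in> R\<close> by blast
qed

lemma SS_Phi: "r \<in> SS \<phi> R \<Longrightarrow> (phi_word \<phi> ^^ n) r \<in> SS \<phi> R"
  by (induction n) (auto intro: SS_phi)

lemma Eq_phi1:
  assumes "elem_step (SS \<phi> R) X Y" shows "Eq \<phi> R (phi_word \<phi> X) (phi_word \<phi> Y)"
  using assms
proof (cases rule: elem_step.cases)
  case (ins_free u v x e)
  have c: "Eq \<phi> R (phi_word \<phi> [(x,e),(x,\<not>e)]) []"
    by (cases e) (simp_all add: Eq_cancel1 Eq_cancel2)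
  have "Eq \<phi> R (phi_word \<phi> u @ phi_word \<phi> [(x,e),(x,\<not>e)] @ phi_word \<phi> v) (phi_word \<phi> u @ [] @ phi_word \<phi> v)"
    by (rule Eq_ctx[OF c])
  then have "Eq \<phi> R (phi_word \<phi> (u @ [(x,e),(x,\<not>e)] @ v)) (phi_word \<phi> (u @ v))"
    by (simp only: phi_append append_Nil)
  then show ?thesis using ins_free Eq_sym by metis
next
  case (del_free u x e v)
  have c: "Eq \<phi> R (phi_word \<phi> [(x,e),(x,\<not>e)]) []"
    by (cases e) (simp_all add: Eq_cancel1 Eq_cancel2)
  have "Eq \<phi> R (phi_word \<phi> u @ phi_word \<phi> [(x,e),(x,\<not>e)] @ phi_word \<phi> v) (phi_word \<phi> u @ [] @ phi_word \<phi> v)"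
    by (rule Eq_ctx[OF c])
  then have "Eq \<phi> R (phi_word \<phi> (u @ [(x,e),(x,\<not>e)] @ v)) (phi_word \<phi> (u @ v))"
    by (simp only: phi_append append_Nil)
  then show ?thesis using del_free by metis
next
  case (ins_rel r u v)
  have "elem_step (SS \<phi> R) (phi_word \<phi> u @ phi_word \<phi> v) (phi_word \<phi> u @ phi_word \<phi> r @ phi_word \<phi> v)"
    by (rule elem_step.ins_rel) (rule SS_phi[OF ins_rel(3)])
  then show ?thesis using ins_rel by simp
next
  case (del_rel r u v)
  have "elem_step (SS \<phi> R) (phi_word \<phi> u @ phi_word \<phi> r @ phi_word \<phi> v) (phi_word \<phi> u @ phi_word \<phi> v)"
    by (rule elem_step.del_rel) (rule SS_phi[OF del_rel(3)])
  then show ?thesis using del_rel by simp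
qed

lemma Eq_phi: "Eq \<phi> R X Y \<Longrightarrow> Eq \<phi> R (phi_word \<phi> X) (phi_word \<phi> Y)"
  by (induction rule: rtranclp_induct) (auto intro: rtranclp_trans Eq_phi1)

lemma Eq_Phi: "Eq \<phi> R X Y \<Longrightarrow> Eq \<phi> R ((phi_word \<phi> ^^ n) X) ((phi_word \<phi> ^^ n) Y)"
  by (induction n) (auto intro: Eq_phi)

lemma Eq_canc3: "Eq \<phi> R ((phi_word \<phi> ^^ n) (W @ Z @ winv Z)) ((phi_word \<phi> ^^ n) W)"
proof -
  have "Eq \<phi> R (W @ (Z @ winv Z) @ []) (W @ [] @ [])" by (rule Eq_ctx[OF Eq_cancel1])
  then show ?thesis using Eq_Phi by fastforce
qed



fun act1 :: "('a \<Rightarrow> 'a fword) \<Rightarrow> nat \<times> 'a fword \<times> nat \<Rightarrow> 'a letter \<times> bool \<Rightarrow> nat \<times> 'a fword \<times> nat" where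
  "act1 \<phi> (p,W,q) (Gen a, e) = (p, W @ (phi_word \<phi> ^^ q) [(a,e)], q)"
| "act1 \<phi> (p,W,q) (T, True) = (p, W, Suc q)"
| "act1 \<phi> (p,W,q) (T, False) = (if q > 0 then (p, W, q - 1) else (Suc p, phi_word \<phi> W, 0))"

definition act :: "('a \<Rightarrow> 'a fword) \<Rightarrow> nat \<times> 'a fword \<times> nat \<Rightarrow> 'a letter fword \<Rightarrow> nat \<times> 'a fword \<times> nat" where
  "act \<phi> s w = foldl (act1 \<phi>) s w"

lemma act_Nil[simp]: "act \<phi> s [] = s" by (simp add: act_def)
lemma act_Cons[simp]: "act \<phi> s (x # w) = act \<phi> (act1 \<phi> s x) w" by (simp add: act_def)
lemma act_append[simp]: "act \<phi> s (u @ v) = act \<phi> (act \<phi> s u) v" by (simp add: act_def)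
lemma act_lift[simp]: "act \<phi> (p,W,q) (lift_word X) = (p, W @ (phi_word \<phi> ^^ q) X, q)"
proof (induction X arbitrary: W)
  case (Cons x X)
  obtain a e where x: "x = (a,e)" by force
  show ?case using Cons by (simp add: x Phi_Cons[where w=X])
qed simp

fun steq :: "('a \<Rightarrow> 'a fword) \<Rightarrow> 'a fword set \<Rightarrow> nat \<times> 'a fword \<times> nat \<Rightarrow> nat \<times> 'a fword \<times> nat \<Rightarrow> bool" where
  "steq \<phi> R (p,W,q) (p',W',q') \<longleftrightarrow> int p - int q = int p' - int q' \<and>
     (\<exists>i. Eq \<phi> R ((phi_word \<phi> ^^ (i + q')) W) ((phi_word \<phi> ^^ (i + q)) W'))"

lemma steq_refl: "steq \<phi> R s s"
  by (cases s) (auto intro!: exI[of _ 0])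

lemma steq_sym: "steq \<phi> R s s' \<Longrightarrow> steq \<phi> R s' s"
  by (cases s; cases s') (auto intro: Eq_sym)

lemma Phi_comp: "(phi_word \<phi> ^^ m) ((phi_word \<phi> ^^ n) X) = (phi_word \<phi> ^^ (m + n)) X"
  by (simp add: funpow_add)

lemma Phi_swap: "(phi_word \<phi> ^^ n) (phi_word \<phi> X) = phi_word \<phi> ((phi_word \<phi> ^^ n) X)"
  by (simp add: funpow_swap1)

lemma steq_trans: "steq \<phi> R s1 s2 \<Longrightarrow> steq \<phi> R s2 s3 \<Longrightarrow> steq \<phi> R s1 s3"
proof -
  obtain p1 W1 q1 where s1: "s1 = (p1,W1,q1)" by (cases s1) auto
  obtain p2 W2 q2 where s2: "s2 = (p2,W2,q2)" by (cases s2) auto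
  obtain p3 W3 q3 where s3: "s3 = (p3,W3,q3)" by (cases s3) auto
  assume a1: "steq \<phi> R s1 s2" and a2: "steq \<phi> R s2 s3"
  from a1 obtain i where i: "Eq \<phi> R ((phi_word \<phi> ^^ (i + q2)) W1) ((phi_word \<phi> ^^ (i + q1)) W2)"
    and d1: "int p1 - int q1 = int p2 - int q2" by (auto simp: s1 s2)
  from a2 obtain j where j: "Eq \<phi> R ((phi_word \<phi> ^^ (j + q3)) W2) ((phi_word \<phi> ^^ (j + q2)) W3)"
    and d2: "int p2 - int q2 = int p3 - int q3" by (auto simp: s2 s3)
  have x1: "Eq \<phi> R ((phi_word \<phi> ^^ (j + q3)) ((phi_word \<phi> ^^ (i + q2)) W1)) ((phi_word \<phi> ^^ (j + q3)) ((phi_word \<phi> ^^ (i + q1)) W2))"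
    by (rule Eq_Phi[OF i])
  have x2: "Eq \<phi> R ((phi_word \<phi> ^^ (i + q1)) ((phi_word \<phi> ^^ (j + q3)) W2)) ((phi_word \<phi> ^^ (i + q1)) ((phi_word \<phi> ^^ (j + q2)) W3))"
    by (rule Eq_Phi[OF j])
  have e1: "(phi_word \<phi> ^^ (j + q3)) ((phi_word \<phi> ^^ (i + q2)) W1) = (phi_word \<phi> ^^ ((i + j + q2) + q3)) W1"
    by (simp add: Phi_comp ac_simps)
  have e2: "(phi_word \<phi> ^^ (j + q3)) ((phi_word \<phi> ^^ (i + q1)) W2) = (phi_word \<phi> ^^ (i + q1)) ((phi_word \<phi> ^^ (j + q3)) W2)"
    by (simp add: Phi_comp ac_simps)
  have e3: "(phi_word \<phi> ^^ (i + q1)) ((phi_word \<phi> ^^ (j + q2)) W3) = (phi_word \<phi> ^^ ((i + j + q2) + q1)) W3"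
    by (simp add: Phi_comp ac_simps)
  have "Eq \<phi> R ((phi_word \<phi> ^^ ((i + j + q2) + q3)) W1) ((phi_word \<phi> ^^ ((i + j + q2) + q1)) W3)"
    using rtranclp_trans[OF x1 x2[folded e2]] unfolding e1 e3 .
  then show ?thesis using d1 d2 by (auto simp: s1 s3)
qed

lemma steq_up: "steq \<phi> R (p,W,q) (p',W',q') \<Longrightarrow> steq \<phi> R (Suc p, phi_word \<phi> W, q) (Suc p', phi_word \<phi> W', q')"
proof -
  assume "steq \<phi> R (p,W,q) (p',W',q')"
  then obtain i where i: "Eq \<phi> R ((phi_word \<phi> ^^ (i + q')) W) ((phi_word \<phi> ^^ (i + q)) W')"
    and d: "int p - int q = int p' - int q'" by auto
  have "Eq \<phi> R ((phi_word \<phi> ^^ (i + q')) (phi_word \<phi> W)) ((phi_word \<phi> ^^ (i + q)) (phi_word \<phi> W'))"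
    using Eq_phi[OF i] by (simp add: Phi_swap)
  then show ?thesis using d by auto
qed

lemma actT: "steq \<phi> R (act1 \<phi> (p,W,q) (T,False)) (Suc p, phi_word \<phi> W, q)"
proof (cases q)
  case 0 then show ?thesis by (simp add: steq_refl)
next
  case (Suc q')
  show ?thesis using Suc by (auto intro!: exI[of _ 0] simp: Phi_swap)
qed

lemma steq_act1: "steq \<phi> R s s' \<Longrightarrow> steq \<phi> R (act1 \<phi> s x) (act1 \<phi> s' x)"
proof -
  assume a: "steq \<phi> R s s'"
  obtain p W q where s: "s = (p,W,q)" by (cases s) auto
  obtain p' W' q' where s': "s' = (p',W',q')" by (cases s') auto
  from a obtain i where i: "Eq \<phi> R ((phi_word \<phi> ^^ (i + q')) W) ((phi_word \<phi> ^^ (i + q)) W')"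
    and d: "int p - int q = int p' - int q'" by (auto simp: s s')
  obtain l e where x: "x = (l,e)" by force
  show ?thesis
  proof (cases l)
    case (Gen a)
    have "Eq \<phi> R ((phi_word \<phi> ^^ (i + q')) W @ (phi_word \<phi> ^^ (i + q')) ((phi_word \<phi> ^^ q) [(a,e)]))
        ((phi_word \<phi> ^^ (i + q)) W' @ (phi_word \<phi> ^^ (i + q)) ((phi_word \<phi> ^^ q') [(a,e)]))"
      by (rule Eq_app[OF i]) (simp add: Phi_comp ac_simps)
    then show ?thesis using d by (auto simp: s s' x Gen Phi_append)
  next
    case T
    show ?thesis
    proof (cases e)
      case True
      have "Eq \<phi> R ((phi_word \<phi> ^^ Suc (i + q')) W) ((phi_word \<phi> ^^ Suc (i + q)) W')"
        using Eq_phi[OF i] by simp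
      then show ?thesis using d by (auto simp: s s' x T True)
    next
      case False
      have "steq \<phi> R (Suc p, phi_word \<phi> W, q) (Suc p', phi_word \<phi> W', q')"
        by (rule steq_up) (use a in \<open>simp add: s s'\<close>)
      moreover have "steq \<phi> R (act1 \<phi> (p,W,q) (T,False)) (Suc p, phi_word \<phi> W, q)" by (rule actT)
      moreover have "steq \<phi> R (Suc p', phi_word \<phi> W', q') (act1 \<phi> (p',W',q') (T,False))" by (rule steq_sym[OF actT])
      ultimately have "steq \<phi> R (act1 \<phi> (p,W,q) (T,False)) (act1 \<phi> (p',W',q') (T,False))"
        using steq_trans by blast
      then show ?thesis by (simp only: s s' x T False)
    qed
  qed
qed

lemma steq_act: "steq \<phi> R s s' \<Longrightarrow> steq \<phi> R (act \<phi> s w) (act \<phi> s' w)"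
  by (induction w arbitrary: s s') (simp_all del: steq.simps add: steq_act1)



lemma act_pair: "steq \<phi> R (act \<phi> s [(x,e),(x,\<not>e)]) s"
proof -
  obtain p W q where s: "s = (p,W,q)" by (cases s) auto
  show ?thesis
  proof (cases x)
    case (Gen a)
    have w: "(phi_word \<phi> ^^ q) [(a,\<not>e)] = winv ((phi_word \<phi> ^^ q) [(a,e)])"
      using Phi_winv[where f=\<phi> and n=q and w="[(a,e)]"] by simp
    have "Eq \<phi> R ((phi_word \<phi> ^^ (0 + q)) (W @ (phi_word \<phi> ^^ q) [(a,e)] @ winv ((phi_word \<phi> ^^ q) [(a,e)]))) ((phi_word \<phi> ^^ (0 + q)) W)"
      using Eq_canc3 by simp
    then show ?thesis by (auto simp: s Gen w simp del: steq.simps) (auto intro!: exI[of _ 0])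
  next
    case T
    show ?thesis
    proof (cases e)
      case True then show ?thesis by (simp add: s T steq_refl del: steq.simps)
    next
      case False
      show ?thesis
      proof (cases q)
        case 0 then show ?thesis by (auto simp: s T False intro!: exI[of _ 0])
      next
        case (Suc q') then show ?thesis by (simp add: s T False steq_refl del: steq.simps)
      qed
    qed
  qed
qed

lemma act_rel: "r \<in> pres_rels \<phi> R \<Longrightarrow> steq \<phi> R (act \<phi> s r) s"
proof -
  assume r: "r \<in> pres_rels \<phi> R"
  obtain p W q where s: "s = (p,W,q)" by (cases s) auto
  show ?thesis
  proof (cases "r \<in> lift_word ` R")
    case True
    then obtain r0 where r0: "r = lift_word r0" "r0 \<in> R" by blast
    have ss: "(phi_word \<phi> ^^ q) ((phi_word \<phi> ^^ q) r0) \<in> SS \<phi> R"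
      unfolding SS_def Phi_comp using r0(2) by blast
    have "elem_step (SS \<phi> R) ((phi_word \<phi> ^^ q) W @ (phi_word \<phi> ^^ q) ((phi_word \<phi> ^^ q) r0) @ []) ((phi_word \<phi> ^^ q) W @ [])"
      by (rule elem_step.del_rel[OF ss])
    then have "Eq \<phi> R ((phi_word \<phi> ^^ (0 + q)) (W @ (phi_word \<phi> ^^ q) r0)) ((phi_word \<phi> ^^ (0 + q)) W)"
      by (simp add: Phi_append)
    then show ?thesis by (auto simp: s r0 simp del: steq.simps) (auto intro!: exI[of _ 0])
  next
    case False
    then obtain a where ra: "r = [(Gen a, False), (T, False)] @ winv (lift_word (\<phi> a)) @ [(T, True)]"
      using r unfolding pres_rels_def by blast
    show ?thesis
    proof (cases q)
      case 0
      have "Eq \<phi> R ((phi_word \<phi> ^^ (0 + 0)) (phi_word \<phi> W @ \<phi> a @ winv (\<phi> a))) ((phi_word \<phi> ^^ (0 + 1)) W)"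
        using Eq_canc3[where \<phi>=\<phi> and R=R and n=0 and W="phi_word \<phi> W" and Z="\<phi> a"] by simp
      then show ?thesis by (auto simp: s ra 0 lift_winv[symmetric] simp del: steq.simps) (auto intro!: exI[of _ 0])
    next
      case (Suc q')
      have e: "(phi_word \<phi> ^^ Suc q') [(a, False)] = (phi_word \<phi> ^^ q') (\<phi> a)"
        by (simp add: funpow_Suc_right del: funpow.simps)
      have "Eq \<phi> R ((phi_word \<phi> ^^ (0 + Suc q')) (W @ (phi_word \<phi> ^^ q') (\<phi> a) @ winv ((phi_word \<phi> ^^ q') (\<phi> a)))) ((phi_word \<phi> ^^ (0 + Suc q')) W)"
        by (rule Eq_canc3)
      then show ?thesis by (auto simp: s ra Suc e lift_winv[symmetric] Phi_winv simp del: steq.simps funpow.simps) (auto intro!: exI[of _ 0])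
    qed
  qed
qed

lemma act_elem: "elem_step (pres_rels \<phi> R) u v \<Longrightarrow> steq \<phi> R (act \<phi> s u) (act \<phi> s v)"
proof (induction rule: elem_step.induct)
  case (ins_free u v x e)
  show ?case using steq_act[OF steq_sym[OF act_pair[where \<phi>=\<phi> and R=R and s="act \<phi> s u" and x=x and e=e]], of v] by simp
next
  case (del_free u x e v)
  show ?case using steq_act[OF act_pair[where \<phi>=\<phi> and R=R and s="act \<phi> s u" and x=x and e=e], of v] by simp
next
  case (ins_rel r u v)
  show ?case using steq_act[OF steq_sym[OF act_rel[OF ins_rel, where s="act \<phi> s u"]], of v] by simp
next
  case (del_rel r u v)
  show ?case using steq_act[OF act_rel[OF del_rel, where s="act \<phi> s u"], of v] by simp
qed

lemma act_triv: "in_normal_closure (pres_rels \<phi> R) w \<Longrightarrow> steq \<phi> R (act \<phi> s w) s"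
  unfolding in_normal_closure_def
proof (induction rule: converse_rtranclp_induct)
  case base then show ?case by (simp add: steq_refl del: steq.simps)
next
  case (step y z)
  then show ?case using act_elem[OF step(1), of s] steq_trans by blast
qed



definition nfpath :: "nat \<Rightarrow> 'a fword \<Rightarrow> nat \<Rightarrow> 'a letter fword" where
  "nfpath p W q = replicate p (T,False) @ lift_word W @ replicate q (T,True)"

lemma INV:
  "path_below g L w \<Longrightarrow> (case act \<phi> (0,[],0) w of (p,W,q) \<Rightarrow>
     real_of_int (tsum g) + p \<le> L \<and> int p - int q = tsum w \<and> (bounded_step \<phi> R g L)\<^sup>*\<^sup>* w (nfpath p W q))"
proof (induction w rule: rev_induct)
  case Nil then show ?case by (simp add: nfpath_def)
next
  case (snoc x w)
  have pw: "path_below g L w" and px: "path_below (g @ [] @ w) L [x]" using snoc.prems by auto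
  obtain p W q where st: "act \<phi> (0,[],0) w = (p,W,q)" by (cases "act \<phi> (0,[],0) w") auto
  from snoc.IH[OF pw] st have lev: "real_of_int (tsum g) + p \<le> L" and ts: "int p - int q = tsum w"
    and rw: "(bounded_step \<phi> R g L)\<^sup>*\<^sup>* w (nfpath p W q)" by auto
  have A: "(bounded_step \<phi> R g L)\<^sup>*\<^sup>* ([] @ w @ [x]) ([] @ nfpath p W q @ [x])"
    by (rule rt_ctx) (use rw px lev in simp_all)
  have ex: "real_of_int (tsum g + tsum w + tsum [x]) \<le> L" using px by (auto simp: pb_pbl dest: pbl_base)
  obtain l e where x: "x = (l,e)" by force
  show ?case
  proof (cases l)
    case (Gen a)
    have B: "(bounded_step \<phi> R g L)\<^sup>*\<^sup>* ((replicate p (T,False) @ lift_word W) @ (replicate q (T,True) @ lift_word [(a,e)]) @ [])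
        ((replicate p (T,False) @ lift_word W) @ (lift_word ((phi_word \<phi> ^^ q) [(a,e)]) @ replicate q (T,True)) @ [])"
      by (rule rt_ctx) (rule Qlem, use lev in \<open>simp_all add: pb_pbl\<close>)
    have "(bounded_step \<phi> R g L)\<^sup>*\<^sup>* (w @ [x]) (nfpath p (W @ (phi_word \<phi> ^^ q) [(a,e)]) q)"
      using rtranclp_trans[OF A[unfolded nfpath_def x Gen, simplified] B[simplified]] by (simp add: nfpath_def x Gen)
    then show ?thesis using lev ts by (simp add: st x Gen)
  next
    case T
    show ?thesis
    proof (cases e)
      case True
      have "nfpath p W q @ [x] = nfpath p W (Suc q)"
        by (simp add: nfpath_def x T True replicate_append_same replicate_app_Cons_same)
      then show ?thesis using A lev ts by (simp add: st x T True)
    next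
      case False
      show ?thesis
      proof (cases q)
        case (Suc q')
        have e: "elem_step (cell_boundaries \<phi> R) ((replicate p (T,False) @ lift_word W @ replicate q' (T,True)) @ [(T,True),(T,\<not>True)] @ [])
            ((replicate p (T,False) @ lift_word W @ replicate q' (T,True)) @ [])"
          by (rule elem_step.del_free)
        have r: "nfpath p W q @ [x] = (replicate p (T,False) @ lift_word W @ replicate q' (T,True)) @ [(T,True),(T,\<not>True)] @ []"
          by (simp add: nfpath_def x T False Suc replicate_append_same replicate_app_Cons_same)
        have B: "(bounded_step \<phi> R g L)\<^sup>*\<^sup>* (nfpath p W q @ [x]) (nfpath p W q')"
          unfolding r by (rule bs1) (use e lev in \<open>simp_all add: pb_pbl nfpath_def\<close>)
        show ?thesis using rtranclp_trans[OF A[simplified] B] lev ts by (simp add: st x T False Suc)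
      next
        case 0
        have xF: "x = (T,False)" using x T False by simp
        have lev2: "real_of_int (tsum g) + p + 1 \<le> L" using ex ts 0 by (simp add: x T False)
        have B: "(bounded_step \<phi> R g L)\<^sup>*\<^sup>* (replicate p (T,False) @ (lift_word W @ [(T,False)]) @ [])
            (replicate p (T,False) @ ((T,False) # lift_word (phi_word \<phi> W)) @ [])"
          by (rule rt_ctx) (rule B2, use lev2 in \<open>simp_all add: pb_pbl\<close>)
        have "(bounded_step \<phi> R g L)\<^sup>*\<^sup>* (w @ [x]) (nfpath (Suc p) (phi_word \<phi> W) 0)"
          using rtranclp_trans[OF A[unfolded nfpath_def xF 0, simplified] B[simplified]] by (simp add: nfpath_def x T False 0 replicate_append_same replicate_app_Cons_same)
        then show ?thesis using lev2 ts by (simp add: st x T False 0)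
      qed
    qed
  qed
qed



lemma rep_comm: "replicate (p+k) x = replicate k x @ replicate p x"
  by (metis add.commute replicate_add)

theorem lemma5p9:
  fixes \<phi> :: "'a::finite \<Rightarrow> 'a fword"
    and R :: "'a fword set"
    and B :: nat
    and g w :: "'a letter fword"
    and L :: real
  assumes "finite R"
    and "bounded_depth \<phi> R B"
    and "in_normal_closure (pres_rels \<phi> R) w"
    and "path_below g L w"
  shows "(bounded_step \<phi> R g (L + real B))\<^sup>*\<^sup>* w []"
proof -
  obtain p W q where st: "act \<phi> (0,[],0) w = (p,W,q)" by (cases "act \<phi> (0,[],0) w") auto
  from INV[OF assms(4), of \<phi> R] st have lev: "real_of_int (tsum g) + p \<le> L"
    and rw: "(bounded_step \<phi> R g L)\<^sup>*\<^sup>* w (nfpath p W q)" by auto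
  have "steq \<phi> R (act \<phi> (0,[],0) w) (0,[],0)" by (rule act_triv[OF assms(3)])
  then obtain i where pq: "p = q" and i: "Eq \<phi> R ((phi_word \<phi> ^^ i) W) []"
    by (auto simp: st)
  have "(phi_word \<phi> ^^ i) W \<in> N0 \<phi> R"
    using i unfolding N0_def in_normal_closure_def SS_def by simp
  then obtain k where k: "k \<le> B" and kN: "(phi_word \<phi> ^^ k) W \<in> N0 \<phi> R"
    using assms(2) unfolding bounded_depth_def by blast
  have kE: "(elem_step (SS \<phi> R))\<^sup>*\<^sup>* ((phi_word \<phi> ^^ k) W) []"
    using kN unfolding N0_def in_normal_closure_def SS_def by simp
  let ?M = "L + real B"
  have lev2: "real_of_int (tsum g) + p + k \<le> ?M" using lev k by simp
  have 1: "(bounded_step \<phi> R g ?M)\<^sup>*\<^sup>* w (nfpath p W p)"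
    using rt_mono[OF rw] pq by simp
  have 2: "(bounded_step \<phi> R g ?M)\<^sup>*\<^sup>* (replicate p (T,False) @ lift_word W @ replicate p (T,True))
     (replicate p (T,False) @ (replicate k (T,False) @ lift_word ((phi_word \<phi> ^^ k) W) @ replicate k (T,True)) @ replicate p (T,True))"
    by (rule rt_ctx) (rule PU, use lev2 in \<open>simp_all add: pb_pbl\<close>)
  have 3: "(bounded_step \<phi> R g ?M)\<^sup>*\<^sup>* ((replicate p (T,False) @ replicate k (T,False)) @ lift_word ((phi_word \<phi> ^^ k) W) @ (replicate k (T,True) @ replicate p (T,True)))
     ((replicate p (T,False) @ replicate k (T,False)) @ lift_word [] @ (replicate k (T,True) @ replicate p (T,True)))"
    by (rule rt_ctx) (rule LIFT[OF kE[unfolded SS_def]], use lev2 in \<open>simp_all add: pb_pbl\<close>)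
  have 4: "(bounded_step \<phi> R g ?M)\<^sup>*\<^sup>* (replicate (p + k) (T,False) @ replicate (p + k) (T,True)) []"
    by (rule TD) (use lev2 in simp)
  have r4: "replicate (p + k) (T,False) @ replicate (p + k) (T,True) = (replicate p (T,False) @ replicate k (T,False)) @ lift_word [] @ (replicate k (T,True) @ replicate p (T,True))"
    by (simp only: rep_comm[of p k "(T,True)"] replicate_add[of p k "(T,False)"] append_assoc lift_Nil append_Nil)
  show ?thesis
    using rtranclp_trans[OF rtranclp_trans[OF rtranclp_trans[OF 1[unfolded nfpath_def] 2[simplified]] 3[simplified]] 4[unfolded r4, simplified]]
    by simp
qed


end
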